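(* Let $\mathcal K$ be a 2-category which admits Eilenberg–Moore constructions for monads, and let $(V,\psi):(t,\mu,\eta)\to(t',\mu',\eta')$ be a 1-cell in $\mathrm{EM}^w(\mathcal K)$. Then the 2-cell $Vv\epsilon\ast\psi v\ast\eta'Vv:Vv\Rightarrow Vv$ in $\mathcal K$ is idempotent, and the identities $V\mu\ast\psi t\ast\eta'Vt\ast\psi=\psi$ and $Vv\epsilon\ast\psi v\ast t'Vv\epsilon\ast t'\psi v\ast t'\eta'Vv=Vv\epsilon\ast\psi v$ hold.
   Context: Conventions in a 2-category $\mathcal K$: horizontal composition and whiskering by juxtaposition in the order of functor composition; identity 1-cell of $k$ written $k$, identity 2-cell of $V$ written $V$; vertical composition $\ast$ with $\alpha\ast\beta$ meaning $\beta$ then $\alpha$. A monad $(t,\mu,\eta)$ on $k$: $t:k\to k$, $\mu:tt\Rightarrow t$, $\eta:k\Rightarrow t$, associative and unital. A 1-cell $(t,\mu,\eta)\to(t',\mu',\eta')$ in $\mathrm{EM}^w(\mathcal K)$ ($t$ on $k$, $t'$ on $k'$) is a pair $(V,\psi)$ with $V:k\to k'$ and $\psi:t'V\Rightarrow Vt$ satisfying $V\mu\ast\psi t\ast t'\psi=\psi\ast\mu'V$. $\mathcal K$ admits Eilenberg–Moore constructions for monads means: the inclusion 2-functor from $\mathcal K$ into the Lack–Street 2-category $\mathrm{EM}(\mathcal K)$ of monads has a right 2-adjoint $J$. Consequently every monad $(t,\mu,\eta)$ on $k$ determines an adjunction $f\dashv v$ in $\mathcal K$ with $f:k\to J(t)$,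 $v:J(t)\to k$, unit $\eta:k\Rightarrow vf$ and counit $\epsilon:fv\Rightarrow J(t)$, such that $t=vf$ and $\mu=v\epsilon f$. For $t'$ the corresponding data are $f',v',\eta',\epsilon'$. *)

theory Defs
  imports Main
begin

text \<open>Conventions:
  cmp K g f    : composite of f : a -> b followed by g : b -> c (written g f);
  ide K a      : identity 1-cell of the object a;
  vcmp K a b   : vertical composite a * b (first b, then a);
  idc K f      : identity 2-cell of the 1-cell f;
  hcmp K b a   : horizontal composite (a : f => f' with f,f' : x -> y,
                 b : g => g' with g,g' : y -> z; result g f => g' f').\<close>

record ('o, 'm, 'c) two_cat =
  Ob   :: "'o set"
  Hom  :: "'o \<Rightarrow> 'o \<Rightarrow> 'm set"
  Cell :: "'m \<Rightarrow> 'm \<Rightarrow> 'c set"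
  cmp  :: "'m \<Rightarrow> 'm \<Rightarrow> 'm"
  ide  :: "'o \<Rightarrow> 'm"
  vcmp :: "'c \<Rightarrow> 'c \<Rightarrow> 'c"
  idc  :: "'m \<Rightarrow> 'c"
  hcmp :: "'c \<Rightarrow> 'c \<Rightarrow> 'c"

definition two_category :: "('o, 'm, 'c, 'x) two_cat_scheme \<Rightarrow> bool" where
  "two_category K \<longleftrightarrow>
    \<comment> \<open>underlying category of objects and 1-cells\<close>
    (\<forall>a b f. f \<in> Hom K a b \<longrightarrow> a \<in> Ob K \<and> b \<in> Ob K) \<and>
    (\<forall>a b a' b' f. f \<in> Hom K a b \<longrightarrow> f \<in> Hom K a' b' \<longrightarrow> a = a' \<and> b = b') \<and>
    (\<forall>a. a \<in> Ob K \<longrightarrow> ide K a \<in> Hom K a a) \<and>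
    (\<forall>a b c f g. f \<in> Hom K a b \<longrightarrow> g \<in> Hom K b c \<longrightarrow> cmp K g f \<in> Hom K a c) \<and>
    (\<forall>a b f. f \<in> Hom K a b \<longrightarrow> cmp K f (ide K a) = f \<and> cmp K (ide K b) f = f) \<and>
    (\<forall>a b c d f g h. f \<in> Hom K a b \<longrightarrow> g \<in> Hom K b c \<longrightarrow> h \<in> Hom K c d \<longrightarrow>
        cmp K h (cmp K g f) = cmp K (cmp K h g) f) \<and>
    \<comment> \<open>2-cells: vertical categories on each hom\<close>
    (\<forall>f g \<alpha>. \<alpha> \<in> Cell K f g \<longrightarrow> (\<exists>a b. f \<in> Hom K a b \<and> g \<in> Hom K a b)) \<and>
    (\<forall>f g f' g' \<alpha>. \<alpha> \<in> Cell K f g \<longrightarrow> \<alpha> \<in> Cell K f' g' \<longrightarrow> f = f' \<and> g = g') \<and>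
    (\<forall>a b f. f \<in> Hom K a b \<longrightarrow> idc K f \<in> Cell K f f) \<and>
    (\<forall>f g h \<alpha> \<beta>. \<alpha> \<in> Cell K f g \<longrightarrow> \<beta> \<in> Cell K g h \<longrightarrow> vcmp K \<beta> \<alpha> \<in> Cell K f h) \<and>
    (\<forall>f g \<alpha>. \<alpha> \<in> Cell K f g \<longrightarrow> vcmp K \<alpha> (idc K f) = \<alpha> \<and> vcmp K (idc K g) \<alpha> = \<alpha>) \<and>
    (\<forall>f g h i \<alpha> \<beta> \<gamma>. \<alpha> \<in> Cell K f g \<longrightarrow> \<beta> \<in> Cell K g h \<longrightarrow> \<gamma> \<in> Cell K h i \<longrightarrow>
        vcmp K \<gamma> (vcmp K \<beta> \<alpha>) = vcmp K (vcmp K \<gamma> \<beta>) \<alpha>) \<and>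
    \<comment> \<open>horizontal composition\<close>
    (\<forall>a b c f f' g g' \<alpha> \<beta>. f \<in> Hom K a b \<longrightarrow> g \<in> Hom K b c \<longrightarrow>
        \<alpha> \<in> Cell K f f' \<longrightarrow> \<beta> \<in> Cell K g g' \<longrightarrow>
        hcmp K \<beta> \<alpha> \<in> Cell K (cmp K g f) (cmp K g' f')) \<and>
    (\<forall>a b c f g. f \<in> Hom K a b \<longrightarrow> g \<in> Hom K b c \<longrightarrow>
        hcmp K (idc K g) (idc K f) = idc K (cmp K g f)) \<and>
    (\<forall>a b c f f' f'' g g' g'' \<alpha> \<alpha>' \<beta> \<beta>'. f \<in> Hom K a b \<longrightarrow> g \<in> Hom K b c \<longrightarrow>
        \<alpha> \<in> Cell K f f' \<longrightarrow> \<alpha>' \<in> Cell K f' f'' \<longrightarrow>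
        \<beta> \<in> Cell K g g' \<longrightarrow> \<beta>' \<in> Cell K g' g'' \<longrightarrow>
        hcmp K (vcmp K \<beta>' \<beta>) (vcmp K \<alpha>' \<alpha>) = vcmp K (hcmp K \<beta>' \<alpha>') (hcmp K \<beta> \<alpha>)) \<and>
    (\<forall>a b f f' \<alpha>. f \<in> Hom K a b \<longrightarrow> \<alpha> \<in> Cell K f f' \<longrightarrow>
        hcmp K \<alpha> (idc K (ide K a)) = \<alpha> \<and> hcmp K (idc K (ide K b)) \<alpha> = \<alpha>) \<and>
    (\<forall>a b c d f f' g g' h h' \<alpha> \<beta> \<gamma>. f \<in> Hom K a b \<longrightarrow> g \<in> Hom K b c \<longrightarrow> h \<in> Hom K c d \<longrightarrow>
        \<alpha> \<in> Cell K f f' \<longrightarrow> \<beta> \<in> Cell K g g' \<longrightarrow> \<gamma> \<in> Cell K h h' \<longrightarrow>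
        hcmp K \<gamma> (hcmp K \<beta> \<alpha>) = hcmp K (hcmp K \<gamma> \<beta>) \<alpha>)"

definition wl :: "('o, 'm, 'c, 'x) two_cat_scheme \<Rightarrow> 'm \<Rightarrow> 'c \<Rightarrow> 'c" where
  "wl K f \<alpha> = hcmp K (idc K f) \<alpha>"

definition wr :: "('o, 'm, 'c, 'x) two_cat_scheme \<Rightarrow> 'c \<Rightarrow> 'm \<Rightarrow> 'c" where
  "wr K \<alpha> f = hcmp K \<alpha> (idc K f)"

definition monad :: "('o, 'm, 'c, 'x) two_cat_scheme \<Rightarrow> 'o \<Rightarrow> 'm \<Rightarrow> 'c \<Rightarrow> 'c \<Rightarrow> bool" where
  "monad K k t \<mu> \<eta> \<longleftrightarrow>
    k \<in> Ob K \<and> t \<in> Hom K k k \<and>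
    \<mu> \<in> Cell K (cmp K t t) t \<and> \<eta> \<in> Cell K (ide K k) t \<and>
    vcmp K \<mu> (wl K t \<mu>) = vcmp K \<mu> (wr K \<mu> t) \<and>
    vcmp K \<mu> (wl K t \<eta>) = idc K t \<and>
    vcmp K \<mu> (wr K \<eta> t) = idc K t"

definition EMw_1cell ::
  "('o, 'm, 'c, 'x) two_cat_scheme \<Rightarrow> 'o \<Rightarrow> 'm \<Rightarrow> 'c \<Rightarrow> 'c \<Rightarrow>
   'o \<Rightarrow> 'm \<Rightarrow> 'c \<Rightarrow> 'c \<Rightarrow> 'm \<Rightarrow> 'c \<Rightarrow> bool" where
  "EMw_1cell K k t \<mu> \<eta> k' t' \<mu>' \<eta>' V \<psi> \<longleftrightarrow>
    monad K k t \<mu> \<eta> \<and> monad K k' t' \<mu>' \<eta>' \<and>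
    V \<in> Hom K k k' \<and> \<psi> \<in> Cell K (cmp K t' V) (cmp K V t) \<and>
    vcmp K (wl K V \<mu>) (vcmp K (wr K \<psi> t) (wl K t' \<psi>)) = vcmp K \<psi> (wr K \<mu>' V)"

definition adjunction ::
  "('o, 'm, 'c, 'x) two_cat_scheme \<Rightarrow> 'o \<Rightarrow> 'o \<Rightarrow> 'm \<Rightarrow> 'm \<Rightarrow> 'c \<Rightarrow> 'c \<Rightarrow> bool" where
  "adjunction K k j f v \<eta> \<epsilon> \<longleftrightarrow>
    f \<in> Hom K k j \<and> v \<in> Hom K j k \<and>
    \<eta> \<in> Cell K (ide K k) (cmp K v f) \<and> \<epsilon> \<in> Cell K (cmp K f v) (ide K j) \<and>
    vcmp K (wr K \<epsilon> f) (wl K f \<eta>) = idc K f \<and>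
    vcmp K (wl K v \<epsilon>) (wr K \<eta> v) = idc K v"

definition idempotent_2cell :: "('o, 'm, 'c, 'x) two_cat_scheme \<Rightarrow> 'm \<Rightarrow> 'c \<Rightarrow> bool" where
  "idempotent_2cell K g e \<longleftrightarrow> e \<in> Cell K g g \<and> vcmp K e e = e"

end

theory Submission
  imports Defs
begin

locale tc = fixes K :: "('o,'m,'c,'x) two_cat_scheme" assumes K: "two_category K"
begin
lemma hom_uniq: "f \<in> Hom K a b \<Longrightarrow> f \<in> Hom K a' b' \<Longrightarrow> a = a' \<and> b = b'"
  using conjunct1[OF conjunct2[OF K[unfolded two_category_def]]] by blast
lemma ide_hom: "a \<in> Ob K \<Longrightarrow> ide K a \<in> Hom K a a"
  using conjunct1[OF conjunct2[OF conjunct2[OF K[unfolded two_category_def]]]] by blast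
lemma hom_obj: "f \<in> Hom K a b \<Longrightarrow> a \<in> Ob K \<and> b \<in> Ob K"
  using conjunct1[OF K[unfolded two_category_def]] by blast
lemma cmp_hom: "f \<in> Hom K a b \<Longrightarrow> g \<in> Hom K b c \<Longrightarrow> cmp K g f \<in> Hom K a c"
  using conjunct1[OF conjunct2[OF conjunct2[OF conjunct2[OF K[unfolded two_category_def]]]]] by blast
lemma cmp_ide: "f \<in> Hom K a b \<Longrightarrow> cmp K f (ide K a) = f \<and> cmp K (ide K b) f = f"
  using conjunct1[OF conjunct2[OF conjunct2[OF conjunct2[OF conjunct2[OF K[unfolded two_category_def]]]]]] by blast
lemma cmp_assoc: "f \<in> Hom K a b \<Longrightarrow> g \<in> Hom K b c \<Longrightarrow> h \<in> Hom K c d \<Longrightarrow>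
        cmp K h (cmp K g f) = cmp K (cmp K h g) f"
  using conjunct1[OF conjunct2[OF conjunct2[OF conjunct2[OF conjunct2[OF conjunct2[OF K[unfolded two_category_def]]]]]]] by blast
lemma cell_hom: "\<alpha> \<in> Cell K f g \<Longrightarrow> (\<exists>a b. f \<in> Hom K a b \<and> g \<in> Hom K a b)"
  using conjunct1[OF conjunct2[OF conjunct2[OF conjunct2[OF conjunct2[OF conjunct2[OF conjunct2[OF K[unfolded two_category_def]]]]]]]] by blast
lemma idc_cell: "f \<in> Hom K a b \<Longrightarrow> idc K f \<in> Cell K f f"
  using conjunct1[OF conjunct2[OF conjunct2[OF conjunct2[OF conjunct2[OF conjunct2[OF conjunct2[OF conjunct2[OF conjunct2[OF K[unfolded two_category_def]]]]]]]]]] by blast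
lemma vcmp_cell: "\<alpha> \<in> Cell K f g \<Longrightarrow> \<beta> \<in> Cell K g h \<Longrightarrow> vcmp K \<beta> \<alpha> \<in> Cell K f h"
  using conjunct1[OF conjunct2[OF conjunct2[OF conjunct2[OF conjunct2[OF conjunct2[OF conjunct2[OF conjunct2[OF conjunct2[OF conjunct2[OF K[unfolded two_category_def]]]]]]]]]]] by blast
lemma vcmp_id: "\<alpha> \<in> Cell K f g \<Longrightarrow> vcmp K \<alpha> (idc K f) = \<alpha> \<and> vcmp K (idc K g) \<alpha> = \<alpha>"
  using conjunct1[OF conjunct2[OF conjunct2[OF conjunct2[OF conjunct2[OF conjunct2[OF conjunct2[OF conjunct2[OF conjunct2[OF conjunct2[OF conjunct2[OF K[unfolded two_category_def]]]]]]]]]]]] by blast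
lemma vcmp_assoc: "\<alpha> \<in> Cell K f g \<Longrightarrow> \<beta> \<in> Cell K g h \<Longrightarrow> \<gamma> \<in> Cell K h i \<Longrightarrow>
        vcmp K \<gamma> (vcmp K \<beta> \<alpha>) = vcmp K (vcmp K \<gamma> \<beta>) \<alpha>"
  using conjunct1[OF conjunct2[OF conjunct2[OF conjunct2[OF conjunct2[OF conjunct2[OF conjunct2[OF conjunct2[OF conjunct2[OF conjunct2[OF conjunct2[OF conjunct2[OF K[unfolded two_category_def]]]]]]]]]]]]] by blast
lemma hcmp_cell: "f \<in> Hom K a b \<Longrightarrow> g \<in> Hom K b c \<Longrightarrow>
        \<alpha> \<in> Cell K f f' \<Longrightarrow> \<beta> \<in> Cell K g g' \<Longrightarrow>
        hcmp K \<beta> \<alpha> \<in> Cell K (cmp K g f) (cmp K g' f')"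
  using conjunct1[OF conjunct2[OF conjunct2[OF conjunct2[OF conjunct2[OF conjunct2[OF conjunct2[OF conjunct2[OF conjunct2[OF conjunct2[OF conjunct2[OF conjunct2[OF conjunct2[OF K[unfolded two_category_def]]]]]]]]]]]]]] by blast
lemma hcmp_idc: "f \<in> Hom K a b \<Longrightarrow> g \<in> Hom K b c \<Longrightarrow>
        hcmp K (idc K g) (idc K f) = idc K (cmp K g f)"
  using conjunct1[OF conjunct2[OF conjunct2[OF conjunct2[OF conjunct2[OF conjunct2[OF conjunct2[OF conjunct2[OF conjunct2[OF conjunct2[OF conjunct2[OF conjunct2[OF conjunct2[OF conjunct2[OF K[unfolded two_category_def]]]]]]]]]]]]]]] by blast
lemma xch: "f \<in> Hom K a b \<Longrightarrow> g \<in> Hom K b c \<Longrightarrow>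
        \<alpha> \<in> Cell K f f' \<Longrightarrow> \<alpha>' \<in> Cell K f' f'' \<Longrightarrow>
        \<beta> \<in> Cell K g g' \<Longrightarrow> \<beta>' \<in> Cell K g' g'' \<Longrightarrow>
        hcmp K (vcmp K \<beta>' \<beta>) (vcmp K \<alpha>' \<alpha>) = vcmp K (hcmp K \<beta>' \<alpha>') (hcmp K \<beta> \<alpha>)"
  using conjunct1[OF conjunct2[OF conjunct2[OF conjunct2[OF conjunct2[OF conjunct2[OF conjunct2[OF conjunct2[OF conjunct2[OF conjunct2[OF conjunct2[OF conjunct2[OF conjunct2[OF conjunct2[OF conjunct2[OF K[unfolded two_category_def]]]]]]]]]]]]]]]] by blast
lemma hcmp_ide: "f \<in> Hom K a b \<Longrightarrow> \<alpha> \<in> Cell K f f' \<Longrightarrow>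
        hcmp K \<alpha> (idc K (ide K a)) = \<alpha> \<and> hcmp K (idc K (ide K b)) \<alpha> = \<alpha>"
  using conjunct1[OF conjunct2[OF conjunct2[OF conjunct2[OF conjunct2[OF conjunct2[OF conjunct2[OF conjunct2[OF conjunct2[OF conjunct2[OF conjunct2[OF conjunct2[OF conjunct2[OF conjunct2[OF conjunct2[OF conjunct2[OF K[unfolded two_category_def]]]]]]]]]]]]]]]]] by blast
lemma hcmp_assoc: "f \<in> Hom K a b \<Longrightarrow> g \<in> Hom K b c \<Longrightarrow> h \<in> Hom K c d \<Longrightarrow>
        \<alpha> \<in> Cell K f f' \<Longrightarrow> \<beta> \<in> Cell K g g' \<Longrightarrow> \<gamma> \<in> Cell K h h' \<Longrightarrow>
        hcmp K \<gamma> (hcmp K \<beta> \<alpha>) = hcmp K (hcmp K \<gamma> \<beta>) \<alpha>"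
  using conjunct2[OF conjunct2[OF conjunct2[OF conjunct2[OF conjunct2[OF conjunct2[OF conjunct2[OF conjunct2[OF conjunct2[OF conjunct2[OF conjunct2[OF conjunct2[OF conjunct2[OF conjunct2[OF conjunct2[OF conjunct2[OF K[unfolded two_category_def]]]]]]]]]]]]]]]]] by blast

lemma cell_tgt: "\<alpha> \<in> Cell K f f' \<Longrightarrow> f \<in> Hom K a b \<Longrightarrow> f' \<in> Hom K a b"
proof -
  assume a: "\<alpha> \<in> Cell K f f'" and f: "f \<in> Hom K a b"
  obtain a' b' where h: "f \<in> Hom K a' b'" "f' \<in> Hom K a' b'" using cell_hom[OF a] by blast
  have "a = a' \<and> b = b'" using hom_uniq[OF f h(1)] .
  thus ?thesis using h(2) by simp
qed

lemma wl_cell: "g \<in> Hom K b c \<Longrightarrow> f \<in> Hom K a b \<Longrightarrow> \<alpha> \<in> Cell K f f' \<Longrightarrow>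
   wl K g \<alpha> \<in> Cell K (cmp K g f) (cmp K g f')"
  unfolding wl_def by (rule hcmp_cell[OF _ _ _ idc_cell])
lemma wr_cell: "f \<in> Hom K a b \<Longrightarrow> g \<in> Hom K b c \<Longrightarrow> \<beta> \<in> Cell K g g' \<Longrightarrow>
   wr K \<beta> f \<in> Cell K (cmp K g f) (cmp K g' f)"
  unfolding wr_def by (rule hcmp_cell[OF _ _ idc_cell])

lemma xchg: "f \<in> Hom K a b \<Longrightarrow> g \<in> Hom K b c \<Longrightarrow> \<alpha> \<in> Cell K f f' \<Longrightarrow> \<beta> \<in> Cell K g g' \<Longrightarrow>
  vcmp K (wl K g' \<alpha>) (wr K \<beta> f) = vcmp K (wr K \<beta> f') (wl K g \<alpha>)"
proof -
  assume f: "f \<in> Hom K a b" and g: "g \<in> Hom K b c" and a: "\<alpha> \<in> Cell K f f'" and b: "\<beta> \<in> Cell K g g'"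
  have f': "f' \<in> Hom K a b" using cell_tgt a f .
  have g': "g' \<in> Hom K b c" using cell_tgt b g .
  have "vcmp K (wl K g' \<alpha>) (wr K \<beta> f) = hcmp K (vcmp K (idc K g') \<beta>) (vcmp K \<alpha> (idc K f))"
    unfolding wl_def wr_def by (rule xch[OF f g idc_cell[OF f] a b idc_cell[OF g'], symmetric])
  also have "\<dots> = hcmp K \<beta> \<alpha>" using vcmp_id[OF a] vcmp_id[OF b] by simp
  also have "\<dots> = hcmp K (vcmp K \<beta> (idc K g)) (vcmp K (idc K f') \<alpha>)" using vcmp_id[OF a] vcmp_id[OF b] by simp
  also have "\<dots> = vcmp K (wr K \<beta> f') (wl K g \<alpha>)"
    unfolding wl_def wr_def by (rule xch[OF f g a idc_cell[OF f'] idc_cell[OF g] b])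
  finally show ?thesis .
qed

lemma wl_vcmp: "g \<in> Hom K b c \<Longrightarrow> f \<in> Hom K a b \<Longrightarrow> \<alpha> \<in> Cell K f f' \<Longrightarrow> \<alpha>' \<in> Cell K f' f'' \<Longrightarrow>
  wl K g (vcmp K \<alpha>' \<alpha>) = vcmp K (wl K g \<alpha>') (wl K g \<alpha>)"
proof -
  assume g: "g \<in> Hom K b c" and f: "f \<in> Hom K a b" and a: "\<alpha> \<in> Cell K f f'" and a': "\<alpha>' \<in> Cell K f' f''"
  have "idc K g = vcmp K (idc K g) (idc K g)" using vcmp_id[OF idc_cell[OF g]] by simp
  hence "wl K g (vcmp K \<alpha>' \<alpha>) = hcmp K (vcmp K (idc K g) (idc K g)) (vcmp K \<alpha>' \<alpha>)"
    unfolding wl_def by simp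
  also have "\<dots> = vcmp K (wl K g \<alpha>') (wl K g \<alpha>)"
    unfolding wl_def by (rule xch[OF f g a a' idc_cell[OF g] idc_cell[OF g]])
  finally show ?thesis .
qed
lemma wr_vcmp: "f \<in> Hom K a b \<Longrightarrow> g \<in> Hom K b c \<Longrightarrow> \<beta> \<in> Cell K g g' \<Longrightarrow> \<beta>' \<in> Cell K g' g'' \<Longrightarrow>
  wr K (vcmp K \<beta>' \<beta>) f = vcmp K (wr K \<beta>' f) (wr K \<beta> f)"
proof -
  assume f: "f \<in> Hom K a b" and g: "g \<in> Hom K b c" and b: "\<beta> \<in> Cell K g g'" and b': "\<beta>' \<in> Cell K g' g''"
  have "idc K f = vcmp K (idc K f) (idc K f)" using vcmp_id[OF idc_cell[OF f]] by simp
  hence "wr K (vcmp K \<beta>' \<beta>) f = hcmp K (vcmp K \<beta>' \<beta>) (vcmp K (idc K f) (idc K f))"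
    unfolding wr_def by simp
  also have "\<dots> = vcmp K (wr K \<beta>' f) (wr K \<beta> f)"
    unfolding wr_def by (rule xch[OF f g idc_cell[OF f] idc_cell[OF f] b b'])
  finally show ?thesis .
qed
lemma wl_ide: "f \<in> Hom K a b \<Longrightarrow> \<alpha> \<in> Cell K f f' \<Longrightarrow> wl K (ide K b) \<alpha> = \<alpha>"
  unfolding wl_def using hcmp_ide by blast
lemma wr_ide: "f \<in> Hom K a b \<Longrightarrow> \<alpha> \<in> Cell K f f' \<Longrightarrow> wr K \<alpha> (ide K a) = \<alpha>"
  unfolding wr_def using hcmp_ide by blast
lemma wl_wl: "h \<in> Hom K c d \<Longrightarrow> g \<in> Hom K b c \<Longrightarrow> f \<in> Hom K a b \<Longrightarrow> \<alpha> \<in> Cell K f f' \<Longrightarrow>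
  wl K (cmp K h g) \<alpha> = wl K h (wl K g \<alpha>)"
  unfolding wl_def
  by (simp add: hcmp_idc[symmetric] hcmp_assoc[OF _ _ _ _ idc_cell idc_cell])
lemma wr_wr: "f \<in> Hom K a b \<Longrightarrow> g \<in> Hom K b c \<Longrightarrow> h \<in> Hom K c d \<Longrightarrow> \<alpha> \<in> Cell K h h' \<Longrightarrow>
  wr K \<alpha> (cmp K g f) = wr K (wr K \<alpha> g) f"
  unfolding wr_def
  by (simp add: hcmp_idc[symmetric] hcmp_assoc[OF _ _ _ idc_cell idc_cell])
lemma wl_wr: "f \<in> Hom K a b \<Longrightarrow> g \<in> Hom K b c \<Longrightarrow> h \<in> Hom K c d \<Longrightarrow> \<alpha> \<in> Cell K g g' \<Longrightarrow>
  wl K h (wr K \<alpha> f) = wr K (wl K h \<alpha>) f"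
  unfolding wr_def wl_def
  by (simp add: hcmp_assoc[OF _ _ _ idc_cell _ idc_cell])
lemma wl_idc: "g \<in> Hom K b c \<Longrightarrow> f \<in> Hom K a b \<Longrightarrow> wl K g (idc K f) = idc K (cmp K g f)"
  unfolding wl_def by (rule hcmp_idc)
lemma wr_idc: "g \<in> Hom K b c \<Longrightarrow> f \<in> Hom K a b \<Longrightarrow> wr K (idc K g) f = idc K (cmp K g f)"
  unfolding wr_def by (rule hcmp_idc)

lemma vcmp_assoc': "\<alpha> \<in> Cell K f g \<Longrightarrow> \<beta> \<in> Cell K g h \<Longrightarrow> \<gamma> \<in> Cell K h i \<Longrightarrow>
        vcmp K (vcmp K \<gamma> \<beta>) \<alpha> = vcmp K \<gamma> (vcmp K \<beta> \<alpha>)"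
  by (rule vcmp_assoc[symmetric])
lemma vcmp_idr: "\<alpha> \<in> Cell K f g \<Longrightarrow> vcmp K \<alpha> (idc K f) = \<alpha>" using vcmp_id by blast
lemma coerce: "\<alpha> \<in> Cell K f g \<Longrightarrow> f = f' \<Longrightarrow> g = g' \<Longrightarrow> \<alpha> \<in> Cell K f' g'" by simp
lemma vsub: "vcmp K b a = vcmp K d c \<Longrightarrow> a \<in> Cell K f g \<Longrightarrow> b \<in> Cell K g h \<Longrightarrow>
   c \<in> Cell K f g' \<Longrightarrow> d \<in> Cell K g' h \<Longrightarrow> r \<in> Cell K e f \<Longrightarrow>
   vcmp K b (vcmp K a r) = vcmp K d (vcmp K c r)"
proof -
  assume h: "vcmp K b a = vcmp K d c" "a \<in> Cell K f g" "b \<in> Cell K g h"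
   "c \<in> Cell K f g'" "d \<in> Cell K g' h" "r \<in> Cell K e f"
  have "vcmp K b (vcmp K a r) = vcmp K (vcmp K b a) r" using vcmp_assoc[OF h(6) h(2) h(3)] .
  also have "\<dots> = vcmp K d (vcmp K c r)" using h(1) vcmp_assoc[OF h(6) h(4) h(5)] by simp
  finally show ?thesis .
qed
lemma vsub3: "vcmp K c (vcmp K b a) = vcmp K y x \<Longrightarrow> a \<in> Cell K f g \<Longrightarrow> b \<in> Cell K g h \<Longrightarrow>
   c \<in> Cell K h i \<Longrightarrow> x \<in> Cell K f g' \<Longrightarrow> y \<in> Cell K g' i \<Longrightarrow> r \<in> Cell K e f \<Longrightarrow>
   vcmp K c (vcmp K b (vcmp K a r)) = vcmp K y (vcmp K x r)"
proof -
  assume h: "vcmp K c (vcmp K b a) = vcmp K y x" "a \<in> Cell K f g" "b \<in> Cell K g h"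
   "c \<in> Cell K h i" "x \<in> Cell K f g'" "y \<in> Cell K g' i" "r \<in> Cell K e f"
  have ba: "vcmp K b a \<in> Cell K f h" using vcmp_cell h by blast
  have "vcmp K c (vcmp K b (vcmp K a r)) = vcmp K c (vcmp K (vcmp K b a) r)"
    using vcmp_assoc[OF h(7) h(2) h(3)] by simp
  also have "\<dots> = vcmp K (vcmp K c (vcmp K b a)) r" using vcmp_assoc[OF h(7) ba h(4)] .
  also have "\<dots> = vcmp K y (vcmp K x r)" using h(1) vcmp_assoc[OF h(7) h(5) h(6)] by simp
  finally show ?thesis .
qed

lemma main:
  assumes cell: "EMw_1cell K k t \<mu> \<eta> k' t' \<mu>' \<eta>' V \<psi>"
    and adj: "adjunction K k j f v \<eta> \<epsilon>"
    and t_eq: "t = cmp K v f"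
    and mu_eq: "\<mu> = wr K (wl K v \<epsilon>) f"
  shows "idempotent_2cell K (cmp K V v)
           (vcmp K (wl K (cmp K V v) \<epsilon>) (vcmp K (wr K \<psi> v) (wr K \<eta>' (cmp K V v)))) \<and>
         vcmp K (wl K V \<mu>) (vcmp K (wr K \<psi> t) (vcmp K (wr K \<eta>' (cmp K V t)) \<psi>)) = \<psi> \<and>
         vcmp K (wl K (cmp K V v) \<epsilon>) (vcmp K (wr K \<psi> v)
           (vcmp K (wl K (cmp K t' (cmp K V v)) \<epsilon>)
           (vcmp K (wl K t' (wr K \<psi> v)) (wl K t' (wr K \<eta>' (cmp K V v))))))
         = vcmp K (wl K (cmp K V v) \<epsilon>) (wr K \<psi> v)"
proof -
  have M: "monad K k t \<mu> \<eta>" and M': "monad K k' t' \<mu>' \<eta>'" and V: "V \<in> Hom K k k'"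
    and psi0: "\<psi> \<in> Cell K (cmp K t' V) (cmp K V t)"
    and EM: "vcmp K (wl K V \<mu>) (vcmp K (wr K \<psi> t) (wl K t' \<psi>)) = vcmp K \<psi> (wr K \<mu>' V)"
    using cell unfolding EMw_1cell_def by auto
  have k'o: "k' \<in> Ob K" and t': "t' \<in> Hom K k' k'" and mu': "\<mu>' \<in> Cell K (cmp K t' t') t'"
    and eta': "\<eta>' \<in> Cell K (ide K k') t'" and uL': "vcmp K \<mu>' (wl K t' \<eta>') = idc K t'"
    and uR': "vcmp K \<mu>' (wr K \<eta>' t') = idc K t'"
    using M' unfolding monad_def by auto
  have t: "t \<in> Hom K k k" and mu: "\<mu> \<in> Cell K (cmp K t t) t" using M unfolding monad_def by auto
  have f: "f \<in> Hom K k j" and v: "v \<in> Hom K j k" and eps: "\<epsilon> \<in> Cell K (cmp K f v) (ide K j)"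
    using adj unfolding adjunction_def by auto
  have jo: "j \<in> Ob K" using hom_obj f by blast
  have ik': "ide K k' \<in> Hom K k' k'" using ide_hom k'o .
  have ij: "ide K j \<in> Hom K j j" using ide_hom jo .
  define W where "W = cmp K V v"
  define F where "F = cmp K f v"
  have W: "W \<in> Hom K j k'" unfolding W_def using cmp_hom v V .
  have F: "F \<in> Hom K j j" unfolding F_def using cmp_hom v f .
  have P: "cmp K t' W \<in> Hom K j k'" using cmp_hom W t' .
  have Q: "cmp K W F \<in> Hom K j k'" using cmp_hom F W .
  have tV: "cmp K t' V \<in> Hom K k k'" using cmp_hom V t' .
  have Vt: "cmp K V t \<in> Hom K k k'" using cmp_hom t V .
  have tt: "cmp K t' t' \<in> Hom K k' k'" using cmp_hom t' t' .
  have ttV: "cmp K t' (cmp K t' V) \<in> Hom K k k'" using cmp_hom tV t' .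
  have vF: "cmp K v F \<in> Hom K j k" using cmp_hom F v .
  have FF: "cmp K F F \<in> Hom K j j" using cmp_hom F F .
  have epsF: "\<epsilon> \<in> Cell K F (ide K j)" using eps unfolding F_def .
  have q1: "cmp K (cmp K t' V) v = cmp K t' W" unfolding W_def using cmp_assoc[OF v V t'] by simp
  have q2: "cmp K t v = cmp K v F" unfolding F_def t_eq using cmp_assoc[OF v f v] by simp
  have q3: "cmp K (cmp K V t) v = cmp K W F"
    using cmp_assoc[OF v t V] q2 cmp_assoc[OF F v V] unfolding W_def by simp
  have q4: "cmp K t' (cmp K W F) = cmp K (cmp K t' W) F" using cmp_assoc[OF F W t'] .
  have q5: "cmp K (cmp K t' t') W = cmp K t' (cmp K t' W)" using cmp_assoc[OF W t' t'] by simp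
  have q6: "cmp K (cmp K V t) t = cmp K V (cmp K t t)" using cmp_assoc[OF t t V] by simp
  have q7: "cmp K (cmp K t' V) t = cmp K t' (cmp K V t)" using cmp_assoc[OF t V t'] by simp
  have q8: "cmp K (cmp K t' t') V = cmp K t' (cmp K t' V)" using cmp_assoc[OF V t' t'] by simp
  have iW: "cmp K (ide K k') W = W" "cmp K W (ide K j) = W" using cmp_ide[OF W] by auto
  have iP: "cmp K (ide K k') (cmp K t' W) = cmp K t' W" "cmp K (cmp K t' W) (ide K j) = cmp K t' W"
    using cmp_ide[OF P] by auto
  have iQ: "cmp K (ide K k') (cmp K W F) = cmp K W F" "cmp K (cmp K W F) (ide K j) = cmp K W F"
    using cmp_ide[OF Q] by auto
  have iF: "cmp K (ide K j) F = F" "cmp K F (ide K j) = F" using cmp_ide[OF F] by auto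
  have it': "cmp K (ide K k') t' = t'" "cmp K t' (ide K k') = t'" using cmp_ide[OF t'] by auto
  have itV: "cmp K (ide K k') (cmp K t' V) = cmp K t' V" using cmp_ide[OF tV] by auto
  have iVt: "cmp K (ide K k') (cmp K V t) = cmp K V t" using cmp_ide[OF Vt] by auto
  have psi: "\<psi> \<in> Cell K (cmp K t' V) (cmp K V t)" by (rule psi0)
  have tA: "wl K W \<epsilon> \<in> Cell K (cmp K W F) W"
    using coerce[OF wl_cell[OF W F epsF]] iW by simp
  have tB: "wr K \<psi> v \<in> Cell K (cmp K t' W) (cmp K W F)"
    using coerce[OF wr_cell[OF v tV psi]] q1 q3 by simp
  have tC: "wr K \<eta>' W \<in> Cell K W (cmp K t' W)"
    using coerce[OF wr_cell[OF W ik' eta']] iW by simp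
  have tD: "wl K (cmp K t' W) \<epsilon> \<in> Cell K (cmp K (cmp K t' W) F) (cmp K t' W)"
    using coerce[OF wl_cell[OF P F epsF]] iP by simp
  have ttB: "wl K t' (wr K \<psi> v) \<in> Cell K (cmp K t' (cmp K t' W)) (cmp K (cmp K t' W) F)"
    using coerce[OF wl_cell[OF t' P tB]] q4 by simp
  have ttC: "wl K t' (wr K \<eta>' W) \<in> Cell K (cmp K t' W) (cmp K t' (cmp K t' W))"
    using wl_cell[OF t' W tC] .
  have tA': "wl K (cmp K W F) \<epsilon> \<in> Cell K (cmp K (cmp K W F) F) (cmp K W F)"
    using coerce[OF wl_cell[OF Q F epsF]] iQ by simp
  have tAF: "wr K (wl K W \<epsilon>) F \<in> Cell K (cmp K (cmp K W F) F) (cmp K W F)"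
    using wr_cell[OF F Q tA] .
  have tBF: "wr K (wr K \<psi> v) F \<in> Cell K (cmp K (cmp K t' W) F) (cmp K (cmp K W F) F)"
    using wr_cell[OF F P tB] .
  have tmuW: "wr K \<mu>' W \<in> Cell K (cmp K t' (cmp K t' W)) (cmp K t' W)"
    using coerce[OF wr_cell[OF W tt mu']] q5 by simp
  have tetaQ: "wr K \<eta>' (cmp K W F) \<in> Cell K (cmp K W F) (cmp K (cmp K t' W) F)"
    using coerce[OF wr_cell[OF Q ik' eta']] iQ q4 by simp
  have tetaP: "wr K \<eta>' (cmp K t' W) \<in> Cell K (cmp K t' W) (cmp K t' (cmp K t' W))"
    using coerce[OF wr_cell[OF P ik' eta']] iP by simp
  have ttk: "cmp K t t \<in> Hom K k k" using cmp_hom t t .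
  have tVmu: "wl K V \<mu> \<in> Cell K (cmp K V (cmp K t t)) (cmp K V t)" using wl_cell[OF V ttk mu] .
  have tpsit: "wr K \<psi> t \<in> Cell K (cmp K t' (cmp K V t)) (cmp K V (cmp K t t))"
    using coerce[OF wr_cell[OF t tV psi]] q6 q7 by simp
  have ttpsi: "wl K t' \<psi> \<in> Cell K (cmp K t' (cmp K t' V)) (cmp K t' (cmp K V t))"
    using wl_cell[OF t' tV psi] .
  have tetaVt: "wr K \<eta>' (cmp K V t) \<in> Cell K (cmp K V t) (cmp K t' (cmp K V t))"
    using coerce[OF wr_cell[OF Vt ik' eta']] iVt by simp
  have tetatV: "wr K \<eta>' (cmp K t' V) \<in> Cell K (cmp K t' V) (cmp K t' (cmp K t' V))"
    using coerce[OF wr_cell[OF tV ik' eta']] itV by simp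
  have tmuV: "wr K \<mu>' V \<in> Cell K (cmp K t' (cmp K t' V)) (cmp K t' V)"
    using coerce[OF wr_cell[OF V tt mu']] q8 by simp
  have tetat: "wr K \<eta>' t' \<in> Cell K t' (cmp K t' t')"
    using coerce[OF wr_cell[OF t' ik' eta']] it' by simp
  have tteta: "wl K t' \<eta>' \<in> Cell K t' (cmp K t' t')"
    using coerce[OF wl_cell[OF t' ik' eta']] it' by simp
  have Y1: "vcmp K (wr K \<eta>' (cmp K V t)) \<psi> = vcmp K (wl K t' \<psi>) (wr K \<eta>' (cmp K t' V))"
    using xchg[OF tV ik' psi eta'] wl_ide[OF tV psi] by simp
  have Y2: "vcmp K (wr K \<mu>' V) (wr K \<eta>' (cmp K t' V)) = idc K (cmp K t' V)"
  proof -
    have "wr K \<eta>' (cmp K t' V) = wr K (wr K \<eta>' t') V" using wr_wr[OF V t' ik' eta'] .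
    hence "vcmp K (wr K \<mu>' V) (wr K \<eta>' (cmp K t' V)) = wr K (vcmp K \<mu>' (wr K \<eta>' t')) V"
      using wr_vcmp[OF V t' tetat mu'] by simp
    thus ?thesis using uR' wr_idc[OF t' V] by simp
  qed
  have EMr: "\<And>r e. r \<in> Cell K e (cmp K t' (cmp K t' V)) \<Longrightarrow>
    vcmp K (wl K V \<mu>) (vcmp K (wr K \<psi> t) (vcmp K (wl K t' \<psi>) r)) = vcmp K \<psi> (vcmp K (wr K \<mu>' V) r)"
    by (rule vsub3[OF EM ttpsi tpsit tVmu tmuV psi])
  have C2: "vcmp K (wl K V \<mu>) (vcmp K (wr K \<psi> t) (vcmp K (wr K \<eta>' (cmp K V t)) \<psi>)) = \<psi>"
    using EMr[OF tetatV] Y1 Y2 vcmp_idr[OF psi] by simp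
  have S1: "vcmp K (wr K \<psi> v) (wl K (cmp K t' W) \<epsilon>) = vcmp K (wl K (cmp K W F) \<epsilon>) (wr K (wr K \<psi> v) F)"
    using xchg[OF F P epsF tB] wr_ide[OF P tB] by simp
  have S2: "vcmp K (wl K W \<epsilon>) (wl K (cmp K W F) \<epsilon>) = vcmp K (wl K W \<epsilon>) (wr K (wl K W \<epsilon>) F)"
  proof -
    have e1: "vcmp K \<epsilon> (wr K \<epsilon> F) = vcmp K \<epsilon> (wl K F \<epsilon>)"
      using xchg[OF F F epsF epsF] wl_ide[OF F epsF] wr_ide[OF F epsF] by simp
    have t1: "wr K \<epsilon> F \<in> Cell K (cmp K F F) F" using coerce[OF wr_cell[OF F F epsF]] iF by simp
    have t2: "wl K F \<epsilon> \<in> Cell K (cmp K F F) F" using coerce[OF wl_cell[OF F F epsF]] iF by simp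
    have "wl K W (vcmp K \<epsilon> (wr K \<epsilon> F)) = wl K W (vcmp K \<epsilon> (wl K F \<epsilon>))" using e1 by simp
    hence "vcmp K (wl K W \<epsilon>) (wl K W (wr K \<epsilon> F)) = vcmp K (wl K W \<epsilon>) (wl K W (wl K F \<epsilon>))"
      using wl_vcmp[OF W FF t1 epsF] wl_vcmp[OF W FF t2 epsF] by simp
    thus ?thesis using wl_wl[OF W F F epsF] wl_wr[OF F F W epsF] by simp
  qed
  have EMv: "vcmp K (wr K (wl K W \<epsilon>) F) (vcmp K (wr K (wr K \<psi> v) F) (wl K t' (wr K \<psi> v)))
     = vcmp K (wr K \<psi> v) (wr K \<mu>' W)"
  proof -
    have tin: "vcmp K (wr K \<psi> t) (wl K t' \<psi>) \<in> Cell K (cmp K t' (cmp K t' V)) (cmp K V (cmp K t t))"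
      using vcmp_cell[OF ttpsi tpsit] .
    have "wr K (vcmp K (wl K V \<mu>) (vcmp K (wr K \<psi> t) (wl K t' \<psi>))) v
       = vcmp K (wr K (wl K V \<mu>) v) (vcmp K (wr K (wr K \<psi> t) v) (wr K (wl K t' \<psi>) v))"
      using wr_vcmp[OF v ttV tin tVmu] wr_vcmp[OF v ttV ttpsi tpsit] by simp
    moreover have "wr K (vcmp K \<psi> (wr K \<mu>' V)) v = vcmp K (wr K \<psi> v) (wr K \<mu>' W)"
      using wr_vcmp[OF v ttV tmuV psi] wr_wr[OF v V tt mu'] unfolding W_def by simp
    moreover have "wr K (wl K V \<mu>) v = wr K (wl K W \<epsilon>) F"
    proof -
      have te: "wl K v \<epsilon> \<in> Cell K (cmp K v F) (cmp K v (ide K j))" using wl_cell[OF v F epsF] .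
      have "wl K V \<mu> = wr K (wl K V (wl K v \<epsilon>)) f" unfolding mu_eq using wl_wr[OF f vF V te] .
      also have "\<dots> = wr K (wl K W \<epsilon>) f" unfolding W_def using wl_wl[OF V v F epsF] by simp
      finally have "wr K (wl K V \<mu>) v = wr K (wr K (wl K W \<epsilon>) f) v" by simp
      also have "\<dots> = wr K (wl K W \<epsilon>) F" unfolding F_def using wr_wr[OF v f Q tA] by simp
      finally show ?thesis .
    qed
    moreover have "wr K (wr K \<psi> t) v = wr K (wr K \<psi> v) F"
      using wr_wr[OF v t tV psi] q2 wr_wr[OF F v tV psi] by simp
    moreover have "wr K (wl K t' \<psi>) v = wl K t' (wr K \<psi> v)"
      using wl_wr[OF v tV t' psi] by simp
    ultimately show ?thesis using EM by simp
  qed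
  have U: "vcmp K (wr K \<mu>' W) (wl K t' (wr K \<eta>' W)) = idc K (cmp K t' W)"
    using wl_wr[OF W ik' t' eta'] wr_vcmp[OF W t' tteta mu'] uL' wr_idc[OF t' W] by simp
  have S1r: "\<And>r e. r \<in> Cell K e (cmp K (cmp K t' W) F) \<Longrightarrow>
     vcmp K (wr K \<psi> v) (vcmp K (wl K (cmp K t' W) \<epsilon>) r) =
     vcmp K (wl K (cmp K W F) \<epsilon>) (vcmp K (wr K (wr K \<psi> v) F) r)"
    by (rule vsub[OF S1 tD tB tBF tA'])
  have S2r: "\<And>r e. r \<in> Cell K e (cmp K (cmp K W F) F) \<Longrightarrow>
     vcmp K (wl K W \<epsilon>) (vcmp K (wl K (cmp K W F) \<epsilon>) r) =
     vcmp K (wl K W \<epsilon>) (vcmp K (wr K (wl K W \<epsilon>) F) r)"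
    by (rule vsub[OF S2 tA' tA tAF tA])
  have EMvr: "\<And>r e. r \<in> Cell K e (cmp K t' (cmp K t' W)) \<Longrightarrow>
     vcmp K (wr K (wl K W \<epsilon>) F) (vcmp K (wr K (wr K \<psi> v) F) (vcmp K (wl K t' (wr K \<psi> v)) r))
     = vcmp K (wr K \<psi> v) (vcmp K (wr K \<mu>' W) r)"
    by (rule vsub3[OF EMv ttB tBF tAF tmuW tB])
  have C3: "vcmp K (wl K W \<epsilon>) (vcmp K (wr K \<psi> v)
           (vcmp K (wl K (cmp K t' W) \<epsilon>)
           (vcmp K (wl K t' (wr K \<psi> v)) (wl K t' (wr K \<eta>' W)))))
         = vcmp K (wl K W \<epsilon>) (wr K \<psi> v)"
    using S1r[OF vcmp_cell[OF ttC ttB]] S2r[OF vcmp_cell[OF vcmp_cell[OF ttC ttB] tBF]]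
       EMvr[OF ttC] U vcmp_idr[OF tB] by simp
  have X1: "vcmp K (wr K \<eta>' W) (wl K W \<epsilon>) = vcmp K (wl K (cmp K t' W) \<epsilon>) (wr K \<eta>' (cmp K W F))"
    using xchg[OF Q ik' tA eta'] wl_ide[OF Q tA] wl_wl[OF t' W F epsF] by simp
  have X2: "vcmp K (wr K \<eta>' (cmp K W F)) (wr K \<psi> v) = vcmp K (wl K t' (wr K \<psi> v)) (wr K \<eta>' (cmp K t' W))"
    using xchg[OF P ik' tB eta'] wl_ide[OF P tB] by simp
  have X3: "vcmp K (wr K \<eta>' (cmp K t' W)) (wr K \<eta>' W) = vcmp K (wl K t' (wr K \<eta>' W)) (wr K \<eta>' W)"
    using xchg[OF W ik' tC eta'] wl_ide[OF W tC] by simp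
  have tBC: "vcmp K (wr K \<psi> v) (wr K \<eta>' W) \<in> Cell K W (cmp K W F)" using vcmp_cell[OF tC tB] .
  have te: "vcmp K (wl K W \<epsilon>) (vcmp K (wr K \<psi> v) (wr K \<eta>' W)) \<in> Cell K W W"
    using vcmp_cell[OF tBC tA] .
  have tBCt: "vcmp K (wl K t' (wr K \<psi> v)) (wl K t' (wr K \<eta>' W)) \<in> Cell K (cmp K t' W) (cmp K (cmp K t' W) F)"
    using vcmp_cell[OF ttC ttB] .
  have tZ: "vcmp K (wl K (cmp K t' W) \<epsilon>) (vcmp K (wl K t' (wr K \<psi> v)) (wl K t' (wr K \<eta>' W))) \<in> Cell K (cmp K t' W) (cmp K t' W)"
    using vcmp_cell[OF tBCt tD] .
  have tBZ: "vcmp K (wr K \<psi> v) (vcmp K (wl K (cmp K t' W) \<epsilon>) (vcmp K (wl K t' (wr K \<psi> v)) (wl K t' (wr K \<eta>' W)))) \<in> Cell K (cmp K t' W) (cmp K W F)"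
    using vcmp_cell[OF tZ tB] .
  have "vcmp K (vcmp K (wl K W \<epsilon>) (vcmp K (wr K \<psi> v) (wr K \<eta>' W)))
                (vcmp K (wl K W \<epsilon>) (vcmp K (wr K \<psi> v) (wr K \<eta>' W)))
     = vcmp K (wl K W \<epsilon>) (vcmp K (wr K \<psi> v) (vcmp K (wr K \<eta>' W) (vcmp K (wl K W \<epsilon>) (vcmp K (wr K \<psi> v) (wr K \<eta>' W)))))"
    using vcmp_assoc[OF te tBC tA] vcmp_assoc[OF te tC tB] by simp
  also have "\<dots> = vcmp K (wl K W \<epsilon>) (vcmp K (wr K \<psi> v) (vcmp K (wl K (cmp K t' W) \<epsilon>) (vcmp K (wr K \<eta>' (cmp K W F)) (vcmp K (wr K \<psi> v) (wr K \<eta>' W)))))"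
    using vsub[OF X1 tA tC tetaQ tD tBC] by simp
  also have "\<dots> = vcmp K (wl K W \<epsilon>) (vcmp K (wr K \<psi> v) (vcmp K (wl K (cmp K t' W) \<epsilon>) (vcmp K (wl K t' (wr K \<psi> v)) (vcmp K (wr K \<eta>' (cmp K t' W)) (wr K \<eta>' W)))))"
    using vsub[OF X2 tB tetaQ tetaP ttB tC] by simp
  also have "\<dots> = vcmp K (wl K W \<epsilon>) (vcmp K (wr K \<psi> v) (vcmp K (wl K (cmp K t' W) \<epsilon>) (vcmp K (wl K t' (wr K \<psi> v)) (vcmp K (wl K t' (wr K \<eta>' W)) (wr K \<eta>' W)))))"
    using X3 by simp
  also have "\<dots> = vcmp K (vcmp K (wl K W \<epsilon>) (vcmp K (wr K \<psi> v) (vcmp K (wl K (cmp K t' W) \<epsilon>) (vcmp K (wl K t' (wr K \<psi> v)) (wl K t' (wr K \<eta>' W)))))) (wr K \<eta>' W)"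
    using vcmp_assoc[OF tC ttC ttB] vcmp_assoc[OF tC tBCt tD] vcmp_assoc[OF tC tZ tB] vcmp_assoc[OF tC tBZ tA]
    by simp
  also have "\<dots> = vcmp K (wl K W \<epsilon>) (vcmp K (wr K \<psi> v) (wr K \<eta>' W))"
    using C3 vcmp_assoc[OF tC tB tA] by simp
  finally have C1: "idempotent_2cell K W (vcmp K (wl K W \<epsilon>) (vcmp K (wr K \<psi> v) (wr K \<eta>' W)))"
    unfolding idempotent_2cell_def using te by simp
  show ?thesis using C1 C2 C3 unfolding W_def by simp
qed
end

theorem lemma3p2:
  fixes K :: "('o, 'm, 'c) two_cat"
    and k k' j :: 'o and t t' V f v :: 'm and \<mu> \<eta> \<mu>' \<eta>' \<psi> \<epsilon> :: 'c
  assumes K: "two_category K"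
    and cell: "EMw_1cell K k t \<mu> \<eta> k' t' \<mu>' \<eta>' V \<psi>"
    and adj: "adjunction K k j f v \<eta> \<epsilon>"
    and t_eq: "t = cmp K v f"
    and mu_eq: "\<mu> = wr K (wl K v \<epsilon>) f"
  shows "idempotent_2cell K (cmp K V v)
           (vcmp K (wl K (cmp K V v) \<epsilon>) (vcmp K (wr K \<psi> v) (wr K \<eta>' (cmp K V v)))) \<and>
         vcmp K (wl K V \<mu>) (vcmp K (wr K \<psi> t) (vcmp K (wr K \<eta>' (cmp K V t)) \<psi>)) = \<psi> \<and>
         vcmp K (wl K (cmp K V v) \<epsilon>) (vcmp K (wr K \<psi> v)
           (vcmp K (wl K (cmp K t' (cmp K V v)) \<epsilon>)
           (vcmp K (wl K t' (wr K \<psi> v)) (wl K t' (wr K \<eta>' (cmp K V v))))))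
         = vcmp K (wl K (cmp K V v) \<epsilon>) (wr K \<psi> v)"
  using tc.main[OF tc.intro[OF K] cell adj t_eq mu_eq] .

end
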